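(* The variety $\mathsf{V}(S_{(4,459)})$ is the ai-semiring variety defined by the identities $x^2y\approx xy$; $xyz\approx xzy$; $xy\approx xy+x$; $x+yxz\approx yxz+xzy$, $x+xz\approx xz$, $x+yx\approx yx+xy$; and $x_1x_2+x_3x_4\approx x_1x_2+x_3x_4+x_1x_2x_3x_4$.
   Context: An ai-semiring is an algebra $(S,+,\cdot)$ with $(S,+)$ a semilattice, $(S,\cdot)$ a semigroup, and both distributive laws. $\mathsf{V}(S)$ is the variety generated by $S$; "the ai-semiring variety defined by identities $\Sigma$" is the class of all ai-semirings satisfying $\Sigma$. $S_{(4,459)}$ has carrier $\{1,2,3,4\}$; addition: $x+x=x$, $2+x=x$, $1+x=1$ for all $x$, $3+4=1$; multiplication (row $a$, column $b$ gives $a\cdot b$): row $1$: $1,1,1,1$; row $2$: $3,2,3,3$; row $3$: $3,3,3,3$; row $4$: $1,1,1,1$. *)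

theory Defs
  imports Main
begin

datatype trm = V nat | Pl trm trm | Tm trm trm

fun eval :: "('a \<Rightarrow> 'a \<Rightarrow> 'a) \<Rightarrow> ('a \<Rightarrow> 'a \<Rightarrow> 'a) \<Rightarrow> (nat \<Rightarrow> 'a) \<Rightarrow> trm \<Rightarrow> 'a" where
  "eval ad mu \<rho> (V i) = \<rho> i"
| "eval ad mu \<rho> (Pl s t) = ad (eval ad mu \<rho> s) (eval ad mu \<rho> t)"
| "eval ad mu \<rho> (Tm s t) = mu (eval ad mu \<rho> s) (eval ad mu \<rho> t)"

definition closed_alg :: "'a set \<Rightarrow> ('a \<Rightarrow> 'a \<Rightarrow> 'a) \<Rightarrow> ('a \<Rightarrow> 'a \<Rightarrow> 'a) \<Rightarrow> bool" where
  "closed_alg A ad mu \<longleftrightarrow> (\<forall>x\<in>A. \<forall>y\<in>A. ad x y \<in> A \<and> mu x y \<in> A)"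

definition ai_semiring :: "'a set \<Rightarrow> ('a \<Rightarrow> 'a \<Rightarrow> 'a) \<Rightarrow> ('a \<Rightarrow> 'a \<Rightarrow> 'a) \<Rightarrow> bool" where
  "ai_semiring A ad mu \<longleftrightarrow> closed_alg A ad mu \<and>
     (\<forall>x\<in>A. \<forall>y\<in>A. \<forall>z\<in>A.
        ad (ad x y) z = ad x (ad y z) \<and> ad x y = ad y x \<and> ad x x = x \<and>
        mu (mu x y) z = mu x (mu y z) \<and>
        mu x (ad y z) = ad (mu x y) (mu x z) \<and> mu (ad y z) x = ad (mu y x) (mu z x))"

definition sat :: "'a set \<Rightarrow> ('a \<Rightarrow> 'a \<Rightarrow> 'a) \<Rightarrow> ('a \<Rightarrow> 'a \<Rightarrow> 'a) \<Rightarrow> trm \<Rightarrow> trm \<Rightarrow> bool" where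
  "sat A ad mu p q \<longleftrightarrow> (\<forall>\<rho>. (\<forall>i. \<rho> i \<in> A) \<longrightarrow> eval ad mu \<rho> p = eval ad mu \<rho> q)"

definition S_car :: "nat set" where "S_car = {1,2,3,4}"

definition S_add :: "nat \<Rightarrow> nat \<Rightarrow> nat" where
  "S_add a b = (if a = b then a else if a = 2 then b else if b = 2 then a else 1)"

definition S_mul :: "nat \<Rightarrow> nat \<Rightarrow> nat" where
  "S_mul a b = (if a = 1 \<or> a = 4 then 1 else if a = 3 then 3 else if b = 2 then 2 else 3)"

text \<open>Membership in the variety V(S) generated by S: by Birkhoff's HSP theorem, V(S) is
  the class of all algebras of the signature satisfying every identity that holds in S.\<close>
definition in_VS :: "'a set \<Rightarrow> ('a \<Rightarrow> 'a \<Rightarrow> 'a) \<Rightarrow> ('a \<Rightarrow> 'a \<Rightarrow> 'a) \<Rightarrow> bool" where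
  "in_VS A ad mu \<longleftrightarrow> closed_alg A ad mu \<and>
     (\<forall>p q. sat S_car S_add S_mul p q \<longrightarrow> sat A ad mu p q)"

abbreviation "x1 \<equiv> V 1"
abbreviation "x2 \<equiv> V 2"
abbreviation "x3 \<equiv> V 3"
abbreviation "x4 \<equiv> V 4"
abbreviation "vx \<equiv> V 0"
abbreviation "vy \<equiv> V 5"
abbreviation "vz \<equiv> V 6"

text \<open>The identities of the proposition (products are left-associated; associativity
  makes this immaterial in ai-semirings).\<close>
definition Sigma_ids :: "(trm \<times> trm) set" where
  "Sigma_ids = {
     (Tm (Tm vx vx) vy, Tm vx vy),
     (Tm (Tm vx vy) vz, Tm (Tm vx vz) vy),
     (Tm vx vy, Pl (Tm vx vy) vx),
     (Pl vx (Tm (Tm vy vx) vz), Pl (Tm (Tm vy vx) vz) (Tm (Tm vx vz) vy)),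
     (Pl vx (Tm vx vz), Tm vx vz),
     (Pl vx (Tm vy vx), Pl (Tm vy vx) (Tm vx vy)),
     (Pl (Tm x1 x2) (Tm x3 x4), Pl (Pl (Tm x1 x2) (Tm x3 x4)) (Tm (Tm (Tm x1 x2) x3) x4))}"

end

theory Submission
  imports Defs
begin

fun lets :: "trm \<Rightarrow> nat set" where
  "lets (V i) = {i}" | "lets (Pl s t) = lets s \<union> lets t" | "lets (Tm s t) = {}"
fun fh :: "trm \<Rightarrow> nat set" where
  "fh (V i) = {i}" | "fh (Pl s t) = fh s \<union> fh t" | "fh (Tm s t) = fh s"
fun vs :: "trm \<Rightarrow> nat set" where
  "vs (V i) = {i}" | "vs (Pl s t) = vs s \<union> vs t" | "vs (Tm s t) = vs s \<union> vs t"
fun lh :: "trm \<Rightarrow> nat set" where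
  "lh (V i) = {}" | "lh (Pl s t) = lh s \<union> lh t" | "lh (Tm s t) = fh s"
fun lc :: "trm \<Rightarrow> nat set" where
  "lc (V i) = {}" | "lc (Pl s t) = lc s \<union> lc t" | "lc (Tm s t) = vs s \<union> vs t"

lemma fh_ne: "fh t \<noteq> {}" by (induction t) auto
lemma fh_vs: "fh t \<subseteq> vs t" by (induction t) auto
lemma lh_lc: "lh t \<subseteq> lc t" using fh_vs by (induction t) auto
lemma fh_eq: "fh t = lh t \<union> lets t" by (induction t) auto
lemma vs_eq: "vs t = lc t \<union> lets t" by (induction t) auto

definition gv :: "bool \<Rightarrow> bool \<Rightarrow> bool \<Rightarrow> nat" where
  "gv a b c = (if a \<or> (b \<and> c) then 1 else if b then 3 else if c then 4 else 2)"

definition fv :: "trm \<Rightarrow> nat \<Rightarrow> nat" where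
  "fv t v = gv (v \<in> lh t) (v \<in> lc t) (v \<in> lets t)"

lemma gv_add: "(a1 \<longrightarrow> b1) \<Longrightarrow> (a2 \<longrightarrow> b2) \<Longrightarrow>
  S_add (gv a1 b1 c1) (gv a2 b2 c2) = gv (a1 \<or> a2) (b1 \<or> b2) (c1 \<or> c2)"
  by (cases a1; cases b1; cases c1; cases a2; cases b2; cases c2) (simp_all add: S_add_def gv_def)

lemma gv_mul: "(a1 \<longrightarrow> b1) \<Longrightarrow> (a2 \<longrightarrow> b2) \<Longrightarrow>
  S_mul (gv a1 b1 c1) (gv a2 b2 c2) = gv (a1 \<or> c1) (b1 \<or> c1 \<or> b2 \<or> c2) False"
  by (cases a1; cases b1; cases c1; cases a2; cases b2; cases c2) (simp_all add: S_mul_def gv_def)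

lemma eval_r4: "eval S_add S_mul (\<lambda>i. if i = v then 4 else 2) t = fv t v"
proof (induction t)
  case (V x) then show ?case by (simp add: fv_def gv_def)
next
  case (Pl s t) show ?case
  proof -
    have "v \<in> lh s \<longrightarrow> v \<in> lc s" "v \<in> lh t \<longrightarrow> v \<in> lc t" using lh_lc[of s] lh_lc[of t] by auto
    then show ?thesis using Pl gv_add[of "v \<in> lh s" "v \<in> lc s" "v \<in> lh t" "v \<in> lc t"]
      by (simp add: fv_def)
  qed
next
  case (Tm s t)
  have "v \<in> lh s \<longrightarrow> v \<in> lc s" "v \<in> lh t \<longrightarrow> v \<in> lc t" using lh_lc[of s] lh_lc[of t] by auto
  then show ?case using Tm gv_mul[of "v \<in> lh s" "v \<in> lc s" "v \<in> lh t" "v \<in> lc t"] fh_eq[of s] vs_eq[of s] vs_eq[of t]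
    by (simp add: fv_def)
qed

definition Hp :: "trm \<Rightarrow> nat set" where "Hp t = lh t \<union> (lets t \<inter> lc t)"

lemma Hp_lc: "Hp t \<subseteq> lc t" using lh_lc[of t] by (auto simp: Hp_def)
lemma fv1: "fv t v = 1 \<longleftrightarrow> v \<in> Hp t" by (simp add: fv_def gv_def Hp_def)
lemma fv3: "fv t v = 3 \<longleftrightarrow> v \<in> lc t - Hp t" using lh_lc[of t] by (auto simp: fv_def gv_def Hp_def)
lemma fv4: "fv t v = 4 \<longleftrightarrow> v \<in> lets t - lc t" using lh_lc[of t] by (auto simp: fv_def gv_def Hp_def)

lemma sat_inst: "sat A ad mu p q \<Longrightarrow> (\<And>i. \<rho> i \<in> A) \<Longrightarrow> eval ad mu \<rho> p = eval ad mu \<rho> q"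
  unfolding sat_def by blast

lemma S_trip:
  assumes "sat S_car S_add S_mul p q"
  shows "Hp p = Hp q \<and> lc p = lc q \<and> lets p - lc p = lets q - lc q"
proof -
  have e: "fv p v = fv q v" for v
  proof -
    have "\<forall>i. (\<lambda>i. if i = v then 4 else 2::nat) i \<in> S_car" by (simp add: S_car_def)
    then have "eval S_add S_mul (\<lambda>i. if i = v then 4 else 2) p = eval S_add S_mul (\<lambda>i. if i = v then 4 else 2) q"
      using sat_inst[OF assms] by (simp add: S_car_def)
    then show ?thesis by (simp only: eval_r4)
  qed
  have a: "v \<in> Hp p \<longleftrightarrow> v \<in> Hp q" for v using e[of v] fv1[of p v] fv1[of q v] by simp
  have b: "v \<in> lc p - Hp p \<longleftrightarrow> v \<in> lc q - Hp q" for v using e[of v] fv3[of p v] fv3[of q v] by simp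
  have c: "v \<in> lets p - lc p \<longleftrightarrow> v \<in> lets q - lc q" for v using e[of v] fv4[of p v] fv4[of q v] by simp
  have "v \<in> lc p \<longleftrightarrow> v \<in> lc q" for v using a[of v] b[of v] Hp_lc[of p] Hp_lc[of q] by blast
  then have "lc p = lc q" by blast
  moreover have "Hp p = Hp q" using a by blast
  moreover have "lets p - lc p = lets q - lc q" using c by blast
  ultimately show ?thesis by blast
qed


locale srA =
  fixes A :: "'a set" and ad mu :: "'a \<Rightarrow> 'a \<Rightarrow> 'a" and \<rho> :: "nat \<Rightarrow> 'a"
  assumes rho[simp]: "\<rho> i \<in> A"
  and cla[simp]: "x \<in> A \<Longrightarrow> y \<in> A \<Longrightarrow> ad x y \<in> A"
  and clm[simp]: "x \<in> A \<Longrightarrow> y \<in> A \<Longrightarrow> mu x y \<in> A"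
  and aas: "x \<in> A \<Longrightarrow> y \<in> A \<Longrightarrow> z \<in> A \<Longrightarrow> ad (ad x y) z = ad x (ad y z)"
  and aco: "x \<in> A \<Longrightarrow> y \<in> A \<Longrightarrow> ad x y = ad y x"
  and aid: "x \<in> A \<Longrightarrow> ad x x = x"
  and mas: "x \<in> A \<Longrightarrow> y \<in> A \<Longrightarrow> z \<in> A \<Longrightarrow> mu (mu x y) z = mu x (mu y z)"
  and ld: "x \<in> A \<Longrightarrow> y \<in> A \<Longrightarrow> z \<in> A \<Longrightarrow> mu x (ad y z) = ad (mu x y) (mu x z)"
  and rd: "x \<in> A \<Longrightarrow> y \<in> A \<Longrightarrow> z \<in> A \<Longrightarrow> mu (ad y z) x = ad (mu y x) (mu z x)"
  and i1: "x \<in> A \<Longrightarrow> y \<in> A \<Longrightarrow> mu (mu x x) y = mu x y"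
  and i2: "x \<in> A \<Longrightarrow> y \<in> A \<Longrightarrow> z \<in> A \<Longrightarrow> mu (mu x y) z = mu (mu x z) y"
  and i3: "x \<in> A \<Longrightarrow> y \<in> A \<Longrightarrow> mu x y = ad (mu x y) x"
  and i6: "x \<in> A \<Longrightarrow> y \<in> A \<Longrightarrow> ad x (mu y x) = ad (mu y x) (mu x y)"
  and i7: "a \<in> A \<Longrightarrow> b \<in> A \<Longrightarrow> c \<in> A \<Longrightarrow> d \<in> A \<Longrightarrow>
     ad (mu a b) (mu c d) = ad (ad (mu a b) (mu c d)) (mu (mu (mu a b) c) d)"
begin

definition le :: "'a \<Rightarrow> 'a \<Rightarrow> bool" where "le x y \<longleftrightarrow> ad x y = y"

abbreviation E :: "trm \<Rightarrow> 'a" where "E t \<equiv> eval ad mu \<rho> t"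

lemma evA[simp]: "E t \<in> A" by (induction t) (auto simp: rho cla clm)

lemma le_trans: "x \<in> A \<Longrightarrow> y \<in> A \<Longrightarrow> z \<in> A \<Longrightarrow> le x y \<Longrightarrow> le y z \<Longrightarrow> le x z"
  unfolding le_def by (metis aas)

lemma le_add1: "x \<in> A \<Longrightarrow> y \<in> A \<Longrightarrow> le x (ad x y)"
  unfolding le_def by (metis aas aid)

lemma le_add2: "x \<in> A \<Longrightarrow> y \<in> A \<Longrightarrow> le y (ad x y)"
  unfolding le_def by (metis aas aid aco)

lemma le_addI: "x \<in> A \<Longrightarrow> y \<in> A \<Longrightarrow> z \<in> A \<Longrightarrow> le x z \<Longrightarrow> le y z \<Longrightarrow> le (ad x y) z"
  unfolding le_def by (metis aas)

lemma le_antisym: "x \<in> A \<Longrightarrow> y \<in> A \<Longrightarrow> le x y \<Longrightarrow> le y x \<Longrightarrow> x = y"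
  unfolding le_def by (metis aco)

lemma le_multl: "x \<in> A \<Longrightarrow> y \<in> A \<Longrightarrow> z \<in> A \<Longrightarrow> le y z \<Longrightarrow> le (mu x y) (mu x z)"
  unfolding le_def by (metis ld)

lemma E1: "x \<in> A \<Longrightarrow> y \<in> A \<Longrightarrow> le x (mu x y)"
  unfolding le_def by (metis i3 aco clm)

lemma hh: "x \<in> A \<Longrightarrow> y \<in> A \<Longrightarrow> le (mu x x) (mu x y)"
  by (metis i1 E1 clm)

lemma xab: "x \<in> A \<Longrightarrow> a \<in> A \<Longrightarrow> b \<in> A \<Longrightarrow> le (mu (mu x a) b) (ad (mu x a) (mu x b))"
proof -
  assume A: "x \<in> A" "a \<in> A" "b \<in> A"
  have "mu (mu (mu x a) x) b = mu (mu x a) b" using A by (metis i2 i1)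
  moreover have "le (mu (mu (mu x a) x) b) (ad (mu x a) (mu x b))"
    using A i7[of x a x b] unfolding le_def by (metis aco cla clm)
  ultimately show ?thesis by simp
qed

lemma C: "h \<in> A \<Longrightarrow> k \<in> A \<Longrightarrow> k' \<in> A \<Longrightarrow> j \<in> A \<Longrightarrow> X \<in> A \<Longrightarrow>
  le (mu h k) X \<Longrightarrow> le (mu k' j) X \<Longrightarrow> le (mu h j) X"
proof -
  assume A: "h \<in> A" "k \<in> A" "k' \<in> A" "j \<in> A" "X \<in> A" and l: "le (mu h k) X" "le (mu k' j) X"
  have s: "le (ad (mu h k) (mu k' j)) X" using A l by (simp add: le_addI clm)
  have "le (mu (mu (mu h k) k') j) (ad (mu h k) (mu k' j))"
    using A i7[of h k k' j] unfolding le_def by (metis aco cla clm)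
  moreover have "mu (mu (mu h k) k') j = mu (mu h j) (mu k k')" using A by (metis mas i2 clm)
  moreover have "le (mu h j) (mu (mu h j) (mu k k'))" using A by (simp add: E1 clm)
  ultimately show ?thesis using A s by (metis le_trans clm cla)
qed

lemma upper: "x \<in> A \<Longrightarrow> y \<in> A \<Longrightarrow> z \<in> A \<Longrightarrow> le x y \<Longrightarrow> le x (ad y z)"
  by (rule le_trans[OF _ _ _ _ le_add1]) simp_all
lemma upper2: "x \<in> A \<Longrightarrow> y \<in> A \<Longrightarrow> z \<in> A \<Longrightarrow> le x z \<Longrightarrow> le x (ad y z)"
  by (rule le_trans[OF _ _ _ _ le_add2]) simp_all

lemma L1: "h \<in> lets p \<Longrightarrow> le (\<rho> h) (E p)"
proof (induction p)
  case (V x) then show ?case by (simp add: le_def aid rho)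
next
  case (Pl s t)
  show ?case
  proof (cases "h \<in> lets s")
    case True
    have "le (\<rho> h) (ad (E s) (E t))" by (rule upper) (simp_all add: Pl.IH(1)[OF True])
    then show ?thesis by simp
  next
    case False
    then have h: "h \<in> lets t" using Pl.prems by simp
    have "le (\<rho> h) (ad (E s) (E t))" by (rule upper2) (simp_all add: Pl.IH(2)[OF h])
    then show ?thesis by simp
  qed
next
  case (Tm s t) then show ?case by simp
qed

lemma F: "h \<in> fh s \<Longrightarrow> y \<in> A \<Longrightarrow> le (mu (\<rho> h) y) (mu (E s) y)"
proof (induction s arbitrary: y)
  case (V x) then show ?case by (simp add: le_def aid rho clm)
next
  case (Pl s t)
  have e: "mu (E (Pl s t)) y = ad (mu (E s) y) (mu (E t) y)" using Pl evA by (simp add: rd)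
  show ?case
  proof (cases "h \<in> fh s")
    case True
    have "le (mu (\<rho> h) y) (mu (E s) y)" using Pl.IH(1)[OF True Pl.prems(2)] .
    then show ?thesis unfolding e by (rule upper[rotated 3]) (simp_all add: Pl.prems(2))
  next
    case False
    then have "h \<in> fh t" using Pl.prems(1) by simp
    then have "le (mu (\<rho> h) y) (mu (E t) y)" using Pl.IH(2) Pl.prems(2) by blast
    then show ?thesis unfolding e by (rule upper2[rotated 3]) (simp_all add: Pl.prems(2))
  qed
next
  case (Tm s t)
  have h: "h \<in> fh s" using Tm by simp
  have yA: "y \<in> A" by (rule Tm.prems(2))
  have a: "le (mu (\<rho> h) (mu (E t) y)) (mu (E s) (mu (E t) y))" using Tm.IH(1)[OF h] yA by simp
  have b: "mu (\<rho> h) (mu (E t) y) = mu (mu (\<rho> h) y) (E t)"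
  proof -
    have "mu (\<rho> h) (mu (E t) y) = mu (mu (\<rho> h) (E t)) y" by (rule mas[symmetric]) (simp_all add: yA)
    also have "\<dots> = mu (mu (\<rho> h) y) (E t)" by (rule i2) (simp_all add: yA)
    finally show ?thesis .
  qed
  have c: "le (mu (\<rho> h) y) (mu (\<rho> h) (mu (E t) y))" unfolding b using yA by (simp add: E1)
  have d: "mu (E (Tm s t)) y = mu (E s) (mu (E t) y)" using yA by (simp add: mas)
  show ?case unfolding d using le_trans[OF _ _ _ c a] yA by simp
qed

lemma E3: "j \<in> vs t \<Longrightarrow> x \<in> A \<Longrightarrow> le (mu x (\<rho> j)) (mu x (E t))"
proof (induction t arbitrary: x)
  case (V i) then show ?case by (simp add: le_def aid rho clm)
next
  case (Pl s t)
  have e: "mu x (E (Pl s t)) = ad (mu x (E s)) (mu x (E t))" using Pl evA by (simp add: ld)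
  show ?case
  proof (cases "j \<in> vs s")
    case True
    have "le (mu x (\<rho> j)) (mu x (E s))" using Pl.IH(1)[OF True Pl.prems(2)] .
    then show ?thesis unfolding e by (rule upper[rotated 3]) (simp_all add: Pl.prems(2))
  next
    case False
    then have "j \<in> vs t" using Pl.prems(1) by simp
    then have "le (mu x (\<rho> j)) (mu x (E t))" using Pl.IH(2) Pl.prems(2) by blast
    then show ?thesis unfolding e by (rule upper2[rotated 3]) (simp_all add: Pl.prems(2))
  qed
next
  case (Tm s t)
  have xA: "x \<in> A" by (rule Tm.prems(2))
  have e: "mu x (E (Tm s t)) = mu (mu x (E s)) (E t)" using xA by (simp add: mas)
  show ?case
  proof (cases "j \<in> vs s")
    case True
    have a: "le (mu x (\<rho> j)) (mu x (E s))" using Tm.IH(1)[OF True xA] .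
    have b: "le (mu x (E s)) (mu (mu x (E s)) (E t))" using xA by (simp add: E1)
    show ?thesis unfolding e using le_trans[OF _ _ _ a b] xA by simp
  next
    case False
    then have j: "j \<in> vs t" using Tm by simp
    have a: "le (mu x (\<rho> j)) (mu x (E t))" using Tm.IH(2)[OF j xA] .
    have b: "le (mu x (E t)) (mu (mu x (E t)) (E s))" using xA by (simp add: E1)
    have c: "mu (mu x (E t)) (E s) = mu (mu x (E s)) (E t)" by (rule i2) (simp_all add: xA)
    show ?thesis unfolding e using le_trans[OF _ _ _ a b] xA c by simp
  qed
qed

lemma L2: "h \<in> lh p \<Longrightarrow> le (mu (\<rho> h) (\<rho> h)) (E p)"
proof (induction p)
  case (V x) then show ?case by simp
next
  case (Pl s t)
  show ?case
  proof (cases "h \<in> lh s")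
    case True
    have "le (mu (\<rho> h) (\<rho> h)) (ad (E s) (E t))" by (rule upper) (simp_all add: Pl.IH(1)[OF True])
    then show ?thesis by simp
  next
    case False
    then have h: "h \<in> lh t" using Pl.prems by simp
    have "le (mu (\<rho> h) (\<rho> h)) (ad (E s) (E t))" by (rule upper2) (simp_all add: Pl.IH(2)[OF h])
    then show ?thesis by simp
  qed
next
  case (Tm s t)
  have h: "h \<in> fh s" using Tm.prems by simp
  have a: "le (mu (\<rho> h) (E t)) (E (Tm s t))" using F[OF h, of "E t"] by simp
  have b: "le (mu (\<rho> h) (\<rho> h)) (mu (\<rho> h) (E t))" by (rule hh) simp_all
  show ?case using le_trans[OF _ _ _ b a] by simp
qed

lemma G: "j \<in> vs s \<Longrightarrow> y \<in> A \<Longrightarrow> \<exists>k. le (mu (\<rho> k) (\<rho> j)) (mu (E s) y)"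
proof (induction s arbitrary: y)
  case (V i)
  then have "le (mu (\<rho> i) (\<rho> i)) (mu (E (V i)) y)" using hh by simp
  moreover have "j = i" using V by simp
  ultimately show ?case by blast
next
  case (Pl s t)
  have e: "mu (E (Pl s t)) y = ad (mu (E s) y) (mu (E t) y)" using Pl evA by (simp add: rd)
  show ?case
  proof (cases "j \<in> vs s")
    case True
    then obtain k where "le (mu (\<rho> k) (\<rho> j)) (mu (E s) y)" using Pl.IH(1) Pl.prems(2) by blast
    then have "le (mu (\<rho> k) (\<rho> j)) (mu (E (Pl s t)) y)"
      unfolding e by (rule upper[rotated 3]) (simp_all add: Pl.prems(2))
    then show ?thesis by blast
  next
    case False
    then have "j \<in> vs t" using Pl.prems(1) by simp
    then obtain k where "le (mu (\<rho> k) (\<rho> j)) (mu (E t) y)" using Pl.IH(2) Pl.prems(2) by blast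
    then have "le (mu (\<rho> k) (\<rho> j)) (mu (E (Pl s t)) y)"
      unfolding e by (rule upper2[rotated 3]) (simp_all add: Pl.prems(2))
    then show ?thesis by blast
  qed
next
  case (Tm s t)
  have yA: "y \<in> A" by (rule Tm.prems(2))
  have d: "mu (E (Tm s t)) y = mu (E s) (mu (E t) y)" using yA by (simp add: mas)
  show ?case
  proof (cases "j \<in> vs s")
    case True
    then show ?thesis using Tm.IH(1)[OF True, of "mu (E t) y"] d yA by simp
  next
    case False
    then have j: "j \<in> vs t" using Tm by simp
    obtain h where h: "h \<in> fh s" using fh_ne by blast
    have a: "le (mu (\<rho> h) (mu (E t) y)) (mu (E s) (mu (E t) y))" using F[OF h] yA by simp
    have b: "mu (\<rho> h) (mu (E t) y) = mu (mu (\<rho> h) (E t)) y" using yA by (simp add: mas)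
    have c: "le (mu (\<rho> h) (E t)) (mu (\<rho> h) (mu (E t) y))" unfolding b using yA by (simp add: E1)
    have e: "le (mu (\<rho> h) (\<rho> j)) (mu (\<rho> h) (E t))" using E3[OF j] by simp
    have "le (mu (\<rho> h) (\<rho> j)) (mu (E s) (mu (E t) y))"
      using le_trans[OF _ _ _ le_trans[OF _ _ _ e c] a] yA by simp
    then show ?thesis using d by auto
  qed
qed

lemma L3: "j \<in> lc p \<Longrightarrow> \<exists>k. le (mu (\<rho> k) (\<rho> j)) (E p)"
proof (induction p)
  case (V x) then show ?case by simp
next
  case (Pl s t)
  show ?case
  proof (cases "j \<in> lc s")
    case True then obtain k where "le (mu (\<rho> k) (\<rho> j)) (E s)" using Pl.IH(1) by blast
    then have "le (mu (\<rho> k) (\<rho> j)) (E (Pl s t))" using upper by simp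
    then show ?thesis by blast
  next
    case False then obtain k where "le (mu (\<rho> k) (\<rho> j)) (E t)" using Pl.IH(2) Pl.prems by auto
    then have "le (mu (\<rho> k) (\<rho> j)) (E (Pl s t))" using upper2 by simp
    then show ?thesis by blast
  qed
next
  case (Tm s t)
  show ?case
  proof (cases "j \<in> vs s")
    case True then show ?thesis using G[OF True, of "E t"] by simp
  next
    case False
    then have j: "j \<in> vs t" using Tm by simp
    obtain h where h: "h \<in> fh s" using fh_ne by blast
    have a: "le (mu (\<rho> h) (E t)) (E (Tm s t))" using F[OF h] by simp
    have b: "le (mu (\<rho> h) (\<rho> j)) (mu (\<rho> h) (E t))" using E3[OF j] by simp
    show ?thesis using le_trans[OF _ _ _ b a] by auto
  qed
qed

lemma Dom: "h \<in> Hp p \<Longrightarrow> \<exists>k. le (mu (\<rho> h) (\<rho> k)) (E p)"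
proof -
  assume "h \<in> Hp p"
  then consider "h \<in> lh p" | "h \<in> lets p" "h \<in> lc p" unfolding Hp_def by blast
  then show ?thesis
  proof cases
    case 1 then show ?thesis using L2 by blast
  next
    case 2
    obtain k where k: "le (mu (\<rho> k) (\<rho> h)) (E p)" using L3[OF 2(2)] by blast
    have l: "le (\<rho> h) (E p)" using L1[OF 2(1)] .
    have a: "le (ad (\<rho> h) (mu (\<rho> k) (\<rho> h))) (E p)" by (rule le_addI) (simp_all add: k l)
    have e: "ad (\<rho> h) (mu (\<rho> k) (\<rho> h)) = ad (mu (\<rho> k) (\<rho> h)) (mu (\<rho> h) (\<rho> k))"
      by (rule i6) simp_all
    have b: "le (mu (\<rho> h) (\<rho> k)) (ad (mu (\<rho> k) (\<rho> h)) (mu (\<rho> h) (\<rho> k)))"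
      by (rule le_add2) simp_all
    have "le (mu (\<rho> h) (\<rho> k)) (E p)" using le_trans[OF _ _ _ b a[unfolded e]] by simp
    then show ?thesis by blast
  qed
qed

lemma Key: "h \<in> Hp p \<Longrightarrow> j \<in> lc p \<Longrightarrow> le (mu (\<rho> h) (\<rho> j)) (E p)"
proof -
  assume "h \<in> Hp p" "j \<in> lc p"
  then obtain k k' where "le (mu (\<rho> h) (\<rho> k)) (E p)" "le (mu (\<rho> k') (\<rho> j)) (E p)"
    using Dom[of h p] L3[of j p] by blast
  then show ?thesis by (rule C[OF rho rho rho rho evA])
qed

lemma M: "X \<in> A \<Longrightarrow> x \<in> A \<Longrightarrow> (\<forall>j\<in>vs q. le (mu x (\<rho> j)) X) \<Longrightarrow> le (mu x (E q)) X"
proof (induction q)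
  case (V i) then show ?case by simp
next
  case (Pl s t)
  have e: "mu x (E (Pl s t)) = ad (mu x (E s)) (mu x (E t))" using Pl.prems by (simp add: ld)
  have "le (mu x (E s)) X" "le (mu x (E t)) X" using Pl by auto
  then have "le (ad (mu x (E s)) (mu x (E t))) X" using Pl.prems by (intro le_addI) simp_all
  then show ?case unfolding e .
next
  case (Tm s t)
  have a: "le (mu x (E s)) X" "le (mu x (E t)) X" using Tm by auto
  have b: "le (mu (mu x (E s)) (E t)) (ad (mu x (E s)) (mu x (E t)))" by (rule xab) (simp_all add: Tm.prems)
  have c: "le (ad (mu x (E s)) (mu x (E t))) X" by (rule le_addI) (simp_all add: a Tm.prems)
  have e: "mu x (E (Tm s t)) = mu (mu x (E s)) (E t)" using Tm.prems by (simp add: mas)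
  show ?case unfolding e using le_trans[OF _ _ _ b c] Tm.prems by simp
qed

lemma Sl: "X \<in> A \<Longrightarrow> y \<in> A \<Longrightarrow> (\<forall>h\<in>fh s. \<forall>j\<in>vs s. le (mu (\<rho> h) (\<rho> j)) X) \<Longrightarrow>
   (\<forall>h\<in>fh s. le (mu (\<rho> h) y) X) \<Longrightarrow> le (mu (E s) y) X"
proof (induction s arbitrary: y)
  case (V i) then show ?case by simp
next
  case (Pl s t)
  have e: "mu (E (Pl s t)) y = ad (mu (E s) y) (mu (E t) y)" using Pl.prems by (simp add: rd)
  have "le (mu (E s) y) X" using Pl.IH(1)[of y] Pl.prems by auto
  moreover have "le (mu (E t) y) X" using Pl.IH(2)[of y] Pl.prems by auto
  ultimately have "le (ad (mu (E s) y) (mu (E t) y)) X" using Pl.prems by (intro le_addI) simp_all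
  then show ?case unfolding e .
next
  case (Tm s t)
  have XA: "X \<in> A" and yA: "y \<in> A" using Tm.prems by auto
  have d: "mu (E (Tm s t)) y = mu (E s) (mu (E t) y)" using yA by (simp add: mas)
  have "le (mu (\<rho> h) (mu (E t) y)) X" if h: "h \<in> fh s" for h
  proof -
    have a: "le (mu (\<rho> h) (E t)) X" using M[of X "\<rho> h" t] Tm.prems h XA by simp
    have a2: "le (mu (\<rho> h) y) X" using Tm.prems h by simp
    have b: "le (mu (mu (\<rho> h) (E t)) y) (ad (mu (\<rho> h) (E t)) (mu (\<rho> h) y))" by (rule xab) (simp_all add: yA)
    have c: "le (ad (mu (\<rho> h) (E t)) (mu (\<rho> h) y)) X" by (rule le_addI) (simp_all add: a a2 XA yA)
    have e: "mu (\<rho> h) (mu (E t) y) = mu (mu (\<rho> h) (E t)) y" using yA by (simp add: mas)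
    show ?thesis unfolding e using le_trans[OF _ _ _ b c] XA yA by simp
  qed
  then have "le (mu (E s) (mu (E t) y)) X" using Tm.IH(1)[of "mu (E t) y"] Tm.prems by simp
  then show ?case using d by simp
qed

definition tle :: "trm \<Rightarrow> trm \<Rightarrow> bool" where
  "tle q p \<longleftrightarrow> lc q \<subseteq> lc p \<and> lh q \<subseteq> Hp p \<and> lets q \<inter> lc p \<subseteq> Hp p \<and> lets q - lc p \<subseteq> lets p"

lemma tle_le: "tle q p \<Longrightarrow> le (E q) (E p)"
proof (induction q)
  case (V i)
  then have "i \<in> Hp p \<or> i \<in> lets p" unfolding tle_def by auto
  then have "i \<in> lh p \<or> i \<in> lets p" unfolding Hp_def by blast
  then show ?case
  proof
    assume 1: "i \<in> lh p"
    have a: "le (\<rho> i) (mu (\<rho> i) (\<rho> i))" by (rule E1) simp_all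
    show ?thesis using le_trans[OF _ _ _ a L2[OF 1]] by simp
  next
    assume "i \<in> lets p" then show ?thesis using L1 by simp
  qed
next
  case (Pl s t)
  have "tle s p" "tle t p" using Pl.prems unfolding tle_def by auto
  then have "le (ad (E s) (E t)) (E p)" using Pl.IH by (intro le_addI) simp_all
  then show ?case by simp
next
  case (Tm s t)
  have hs: "fh s \<subseteq> Hp p" and vv: "vs s \<union> vs t \<subseteq> lc p" using Tm.prems unfolding tle_def by auto
  have k: "le (mu (\<rho> h) (\<rho> j)) (E p)" if "h \<in> fh s" "j \<in> vs s \<union> vs t" for h j
    using Key hs vv that by blast
  have "le (mu (\<rho> h) (E t)) (E p)" if "h \<in> fh s" for h
    by (rule M) (simp_all add: k that)
  then have "le (mu (E s) (E t)) (E p)" by (intro Sl) (simp_all add: k)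
  then show ?case by simp
qed

lemma trip_eq: "Hp p = Hp q \<Longrightarrow> lc p = lc q \<Longrightarrow> lets p - lc p = lets q - lc q \<Longrightarrow> E p = E q"
proof -
  assume a: "Hp p = Hp q" "lc p = lc q" "lets p - lc p = lets q - lc q"
  have "Hp p \<subseteq> lc p" "Hp q \<subseteq> lc q" by (rule Hp_lc)+
  then have "tle q p" "tle p q" using a unfolding tle_def Hp_def by blast+
  then have "le (E q) (E p)" "le (E p) (E q)" using tle_le by blast+
  then show ?thesis by (intro le_antisym) simp_all
qed

end

lemma S3: "a \<in> S_car \<Longrightarrow> b \<in> S_car \<Longrightarrow> c \<in> S_car \<Longrightarrow>
  S_add (S_add a b) c = S_add a (S_add b c) \<and> S_add a b = S_add b a \<and> S_add a a = a \<and>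
  S_mul (S_mul a b) c = S_mul a (S_mul b c) \<and>
  S_mul a (S_add b c) = S_add (S_mul a b) (S_mul a c) \<and> S_mul (S_add b c) a = S_add (S_mul b a) (S_mul c a) \<and>
  S_mul (S_mul a a) b = S_mul a b \<and> S_mul (S_mul a b) c = S_mul (S_mul a c) b \<and>
  S_mul a b = S_add (S_mul a b) a \<and>
  S_add a (S_mul (S_mul b a) c) = S_add (S_mul (S_mul b a) c) (S_mul (S_mul a c) b) \<and>
  S_add a (S_mul a c) = S_mul a c \<and>
  S_add a (S_mul b a) = S_add (S_mul b a) (S_mul a b)"
  unfolding S_car_def by (elim insertE emptyE; simp add: S_add_def S_mul_def)

lemma S4: "a \<in> S_car \<Longrightarrow> b \<in> S_car \<Longrightarrow> c \<in> S_car \<Longrightarrow> d \<in> S_car \<Longrightarrow>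
  S_add (S_mul a b) (S_mul c d) = S_add (S_add (S_mul a b) (S_mul c d)) (S_mul (S_mul (S_mul a b) c) d)"
  unfolding S_car_def by (elim insertE emptyE; simp add: S_add_def S_mul_def)

lemma sat_by: "(\<And>\<rho>. (\<And>i. \<rho> i \<in> S_car) \<Longrightarrow> eval S_add S_mul \<rho> p = eval S_add S_mul \<rho> q) \<Longrightarrow>
  sat S_car S_add S_mul p q"
  unfolding sat_def by blast

lemma VS_sat: "in_VS A ad mu \<Longrightarrow> sat S_car S_add S_mul p q \<Longrightarrow> sat A ad mu p q"
  unfolding in_VS_def by blast

lemma inst3: "sat A ad mu p q \<Longrightarrow> x \<in> A \<Longrightarrow> y \<in> A \<Longrightarrow> z \<in> A \<Longrightarrow>
  eval ad mu (\<lambda>i. if i = 0 then x else if i = 5 then y else z) p =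
  eval ad mu (\<lambda>i. if i = 0 then x else if i = 5 then y else z) q"
  by (erule sat_inst) simp

lemma inst4: "sat A ad mu p q \<Longrightarrow> a \<in> A \<Longrightarrow> b \<in> A \<Longrightarrow> c \<in> A \<Longrightarrow> d \<in> A \<Longrightarrow>
  eval ad mu (\<lambda>i. if i = 1 then a else if i = 2 then b else if i = 3 then c else d) p =
  eval ad mu (\<lambda>i. if i = 1 then a else if i = 2 then b else if i = 3 then c else d) q"
  by (erule sat_inst) simp

lemma sS1: "sat S_car S_add S_mul (Pl (Pl vx vy) vz) (Pl vx (Pl vy vz))"
  apply (rule sat_by) subgoal premises P for \<rho> unfolding eval.simps using S3[OF P[of 0] P[of 5] P[of 6]] by blast done
lemma sS2: "sat S_car S_add S_mul (Pl vx vy) (Pl vy vx)"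
  apply (rule sat_by) subgoal premises P for \<rho> unfolding eval.simps using S3[OF P[of 0] P[of 5] P[of 6]] by blast done
lemma sS3: "sat S_car S_add S_mul (Pl vx vx) vx"
  apply (rule sat_by) subgoal premises P for \<rho> unfolding eval.simps using S3[OF P[of 0] P[of 5] P[of 6]] by blast done
lemma sS4: "sat S_car S_add S_mul (Tm (Tm vx vy) vz) (Tm vx (Tm vy vz))"
  apply (rule sat_by) subgoal premises P for \<rho> unfolding eval.simps using S3[OF P[of 0] P[of 5] P[of 6]] by blast done
lemma sS5: "sat S_car S_add S_mul (Tm vx (Pl vy vz)) (Pl (Tm vx vy) (Tm vx vz))"
  apply (rule sat_by) subgoal premises P for \<rho> unfolding eval.simps using S3[OF P[of 0] P[of 5] P[of 6]] by blast done
lemma sS6: "sat S_car S_add S_mul (Tm (Pl vy vz) vx) (Pl (Tm vy vx) (Tm vz vx))"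
  apply (rule sat_by) subgoal premises P for \<rho> unfolding eval.simps using S3[OF P[of 0] P[of 5] P[of 6]] by blast done

lemma sT1: "sat S_car S_add S_mul (Tm (Tm vx vx) vy) (Tm vx vy)"
  apply (rule sat_by) subgoal premises P for \<rho> unfolding eval.simps using S3[OF P[of 0] P[of 5] P[of 6]] by blast done
lemma sT2: "sat S_car S_add S_mul (Tm (Tm vx vy) vz) (Tm (Tm vx vz) vy)"
  apply (rule sat_by) subgoal premises P for \<rho> unfolding eval.simps using S3[OF P[of 0] P[of 5] P[of 6]] by blast done
lemma sT3: "sat S_car S_add S_mul (Tm vx vy) (Pl (Tm vx vy) vx)"
  apply (rule sat_by) subgoal premises P for \<rho> unfolding eval.simps using S3[OF P[of 0] P[of 5] P[of 6]] by blast done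
lemma sT4: "sat S_car S_add S_mul (Pl vx (Tm (Tm vy vx) vz)) (Pl (Tm (Tm vy vx) vz) (Tm (Tm vx vz) vy))"
  apply (rule sat_by) subgoal premises P for \<rho> unfolding eval.simps using S3[OF P[of 0] P[of 5] P[of 6]] by blast done
lemma sT5: "sat S_car S_add S_mul (Pl vx (Tm vx vz)) (Tm vx vz)"
  apply (rule sat_by) subgoal premises P for \<rho> unfolding eval.simps using S3[OF P[of 0] P[of 5] P[of 6]] by blast done
lemma sT6: "sat S_car S_add S_mul (Pl vx (Tm vy vx)) (Pl (Tm vy vx) (Tm vx vy))"
  apply (rule sat_by) subgoal premises P for \<rho> unfolding eval.simps using S3[OF P[of 0] P[of 5] P[of 6]] by blast done
lemma sT7: "sat S_car S_add S_mul (Pl (Tm x1 x2) (Tm x3 x4)) (Pl (Pl (Tm x1 x2) (Tm x3 x4)) (Tm (Tm (Tm x1 x2) x3) x4))"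
  apply (rule sat_by) subgoal premises P for \<rho> unfolding eval.simps using S4[OF P[of 1] P[of 2] P[of 3] P[of 4]] by blast done

lemma sSig: "(p, q) \<in> Sigma_ids \<Longrightarrow> sat S_car S_add S_mul p q"
  unfolding Sigma_ids_def using sT1 sT2 sT3 sT4 sT5 sT6 sT7 by blast

theorem proposition6p2:
  fixes A :: "'a set" and ad mu :: "'a \<Rightarrow> 'a \<Rightarrow> 'a"
  shows "in_VS A ad mu \<longleftrightarrow>
           (ai_semiring A ad mu \<and> (\<forall>(p, q) \<in> Sigma_ids. sat A ad mu p q))"
proof
  assume V: "in_VS A ad mu"
  have cl: "closed_alg A ad mu" using V unfolding in_VS_def by blast
  have e: "\<And>p q x y z. sat S_car S_add S_mul p q \<Longrightarrow> x \<in> A \<Longrightarrow> y \<in> A \<Longrightarrow> z \<in> A \<Longrightarrow>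
    eval ad mu (\<lambda>i. if i = 0 then x else if i = 5 then y else z) p =
    eval ad mu (\<lambda>i. if i = 0 then x else if i = 5 then y else z) q"
    by (rule inst3[OF VS_sat[OF V]])
  have "ai_semiring A ad mu"
    unfolding ai_semiring_def
  proof (intro conjI cl ballI)
    fix x y z assume xyz: "x \<in> A" "y \<in> A" "z \<in> A"
    show "ad (ad x y) z = ad x (ad y z)" using e[OF sS1 xyz] by simp
    show "ad x y = ad y x" using e[OF sS2 xyz] by simp
    show "ad x x = x" using e[OF sS3 xyz] by simp
    show "mu (mu x y) z = mu x (mu y z)" using e[OF sS4 xyz] by simp
    show "mu x (ad y z) = ad (mu x y) (mu x z)" using e[OF sS5 xyz] by simp
    show "mu (ad y z) x = ad (mu y x) (mu z x)" using e[OF sS6 xyz] by simp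
  qed
  moreover have "\<forall>(p, q) \<in> Sigma_ids. sat A ad mu p q"
  proof (intro ballI, clarify)
    fix p q assume "(p, q) \<in> Sigma_ids" then show "sat A ad mu p q" by (rule VS_sat[OF V sSig])
  qed
  ultimately show "ai_semiring A ad mu \<and> (\<forall>(p, q) \<in> Sigma_ids. sat A ad mu p q)" by blast
next
  assume R: "ai_semiring A ad mu \<and> (\<forall>(p, q) \<in> Sigma_ids. sat A ad mu p q)"
  then have ai: "ai_semiring A ad mu" and sg: "\<And>p q. (p, q) \<in> Sigma_ids \<Longrightarrow> sat A ad mu p q" by blast+
  have cl: "closed_alg A ad mu" using ai unfolding ai_semiring_def by (rule conjunct1)
  have ax: "\<forall>x\<in>A. \<forall>y\<in>A. \<forall>z\<in>A.
        ad (ad x y) z = ad x (ad y z) \<and> ad x y = ad y x \<and> ad x x = x \<and>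
        mu (mu x y) z = mu x (mu y z) \<and>
        mu x (ad y z) = ad (mu x y) (mu x z) \<and> mu (ad y z) x = ad (mu y x) (mu z x)"
    using ai unfolding ai_semiring_def by (rule conjunct2)
  have s1: "sat A ad mu (Tm (Tm vx vx) vy) (Tm vx vy)" by (rule sg) (simp add: Sigma_ids_def)
  have s2: "sat A ad mu (Tm (Tm vx vy) vz) (Tm (Tm vx vz) vy)" by (rule sg) (simp add: Sigma_ids_def)
  have s3: "sat A ad mu (Tm vx vy) (Pl (Tm vx vy) vx)" by (rule sg) (simp add: Sigma_ids_def)
  have s6: "sat A ad mu (Pl vx (Tm vy vx)) (Pl (Tm vy vx) (Tm vx vy))" by (rule sg) (simp add: Sigma_ids_def)
  have s7: "sat A ad mu (Pl (Tm x1 x2) (Tm x3 x4)) (Pl (Pl (Tm x1 x2) (Tm x3 x4)) (Tm (Tm (Tm x1 x2) x3) x4))"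
    by (rule sg) (simp add: Sigma_ids_def)
  show "in_VS A ad mu" unfolding in_VS_def
  proof (intro conjI cl allI impI)
    fix p q assume sS: "sat S_car S_add S_mul p q"
    show "sat A ad mu p q" unfolding sat_def
    proof (intro allI impI)
      fix \<rho> :: "nat \<Rightarrow> 'a" assume rA: "\<forall>i. \<rho> i \<in> A"
      interpret srA A ad mu \<rho>
      proof
        show "\<And>i. \<rho> i \<in> A" using rA by blast
      next
        fix x y assume "x \<in> A" "y \<in> A" then show "ad x y \<in> A" "mu x y \<in> A"
          using cl unfolding closed_alg_def by blast+
      next
        fix x y z assume xyz: "x \<in> A" "y \<in> A" "z \<in> A"
        show "ad (ad x y) z = ad x (ad y z)" "ad x y = ad y x" "mu (mu x y) z = mu x (mu y z)"
          "mu x (ad y z) = ad (mu x y) (mu x z)" "mu (ad y z) x = ad (mu y x) (mu z x)"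
          using ax[rule_format, OF xyz] by blast+
        show "mu (mu x y) z = mu (mu x z) y" using inst3[OF s2 xyz] by simp
      next
        fix x assume "x \<in> A" then show "ad x x = x" using ax by blast
      next
        fix x y assume xy: "x \<in> A" "y \<in> A"
        show "mu (mu x x) y = mu x y" using inst3[OF s1 xy xy(1)] by simp
        show "mu x y = ad (mu x y) x" using inst3[OF s3 xy xy(1)] by simp
        show "ad x (mu y x) = ad (mu y x) (mu x y)" using inst3[OF s6 xy xy(1)] by simp
      next
        fix a b c d assume abcd: "a \<in> A" "b \<in> A" "c \<in> A" "d \<in> A"
        show "ad (mu a b) (mu c d) = ad (ad (mu a b) (mu c d)) (mu (mu (mu a b) c) d)"
          using inst4[OF s7 abcd] by simp
      qed
      have "Hp p = Hp q" "lc p = lc q" "lets p - lc p = lets q - lc q" using S_trip[OF sS] by auto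
      then show "eval ad mu \<rho> p = eval ad mu \<rho> q" by (rule trip_eq)
    qed
  qed
qed

end
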